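(* For integers $s,t\ge0$ let $m_{i,j}^{s,t}=\int_{(0,1)^2}\frac{x^{s+i}y^{s+j}}{x+y}\left(\frac{1-x}{1+x}\right)^t\left(\frac{1-y}{1+y}\right)^tdx\,dy$, $\tau_n^{s,t}=\det(m_{i,j}^{s,t})_{i,j=0}^{n-1}$, $\xi_n^{s,t}=\det(m_{i,j+1}^{s,t})_{i,j=0}^{n-1}$ (with $\tau_0^{s,t}=\xi_0^{s,t}=1$), $$P_n^{s,t}(x)=\frac{1}{\tau_n^{s,t}}\det\begin{pmatrix} m_{0,0}^{s,t}&\cdots&m_{0,n-1}^{s,t}&1\\ \vdots&&\vdots&\vdots\\ m_{n,0}^{s,t}&\cdots&m_{n,n-1}^{s,t}&x^n\end{pmatrix},\qquad Q_n^{s,t}(x)=\frac{1}{\xi_n^{s,t}}\det\begin{pmatrix} m_{0,1}^{s,t}&\cdots&m_{0,n}^{s,t}&1\\ \vdots&&\vdots&\vdots\\ m_{n,1}^{s,t}&\cdots&m_{n,n}^{s,t}&x^n\end{pmatrix}.$$ Then for all $n\ge1$ and $s,t\ge0$, $$Q_n^{s,t}(x)=xP_{n-1}^{s+1,t}(x)-\frac{\xi_{n-1}^{s,t}\tau_n^{s+1,t}}{\xi_n^{s,t}\tau_{n-1}^{s+1,t}}Q_{n-1}^{s,t}(x).$$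
   Context: $m_{i,j}^{s,t}=\langle x^i,y^j\rangle_{s,t}$ for the bilinear form $\langle f,g\rangle_{s,t}=\int_{(0,1)^2}\frac{x^sy^s}{x+y}f(x)g(y)\left(\frac{1-x}{1+x}\right)^t\left(\frac{1-y}{1+y}\right)^tdx\,dy$. The determinants $\tau_n^{s,t},\xi_n^{s,t}$ are positive, so the polynomials are well defined and monic. *)

theory Defs
  imports "HOL-Analysis.Analysis" "Jordan_Normal_Form.Determinant"
begin

definition mom :: "nat \<Rightarrow> nat \<Rightarrow> nat \<Rightarrow> nat \<Rightarrow> real" where
  "mom s t i j = (LINT p : {0<..<1} \<times> {0<..<1} | (lborel :: (real \<times> real) measure).
      (fst p) ^ (s + i) * (snd p) ^ (s + j) / (fst p + snd p)
      * ((1 - fst p) / (1 + fst p)) ^ t * ((1 - snd p) / (1 + snd p)) ^ t)"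

definition tau :: "nat \<Rightarrow> nat \<Rightarrow> nat \<Rightarrow> real" where
  "tau n s t = Determinant.det (Matrix.mat n n (\<lambda>(i, j). mom s t i j))"

definition xi :: "nat \<Rightarrow> nat \<Rightarrow> nat \<Rightarrow> real" where
  "xi n s t = Determinant.det (Matrix.mat n n (\<lambda>(i, j). mom s t i (j + 1)))"

definition Ppoly :: "nat \<Rightarrow> nat \<Rightarrow> nat \<Rightarrow> real \<Rightarrow> real" where
  "Ppoly n s t x = Determinant.det (Matrix.mat (n + 1) (n + 1)
      (\<lambda>(i, j). if j < n then mom s t i j else x ^ i)) / tau n s t"

definition Qpoly :: "nat \<Rightarrow> nat \<Rightarrow> nat \<Rightarrow> real \<Rightarrow> real" where
  "Qpoly n s t x = Determinant.det (Matrix.mat (n + 1) (n + 1)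
      (\<lambda>(i, j). if j < n then mom s t i (j + 1) else x ^ i)) / xi n s t"

end

theory Submission
  imports Defs "HOL-Probability.Probability"
begin

lemma mat_mult_entry:
  fixes fA fB :: "nat \<times> nat \<Rightarrow> 'a :: comm_ring_1"
  assumes "i < n" "j < n"
  shows "(Matrix.mat n n fA * Matrix.mat n n fB) $$ (i, j) = (\<Sum>m<n. fA (i, m) * fB (m, j))"
  using assms by (simp add: scalar_prod_def atLeast0LessThan)

lemma mat_mult_entry2:
  fixes A B :: "'a :: comm_ring_1 mat"
  assumes "A \<in> carrier_mat n n" "B \<in> carrier_mat n n" "i < n" "j < n"
  shows "(A * B) $$ (i, j) = (\<Sum>m<n. A $$ (i, m) * B $$ (m, j))"
proof -
  have d: "dim_row A = n" "dim_col A = n" "dim_row B = n" "dim_col B = n"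
    using assms(1,2) by auto
  have "(A * B) $$ (i, j) = row A i \<bullet> col B j" using assms(3,4) d by simp
  also have "\<dots> = (\<Sum>m\<in>{0..<n}. row A i $ m * col B j $ m)"
    unfolding scalar_prod_def using d by simp
  also have "\<dots> = (\<Sum>m<n. A $$ (i, m) * B $$ (m, j))"
    unfolding atLeast0LessThan using d assms(3,4) by (intro sum.cong) auto
  finally show ?thesis .
qed

lemma det_scale_rc:
  fixes A :: "nat \<Rightarrow> nat \<Rightarrow> 'a :: comm_ring_1"
  shows "Determinant.det (Matrix.mat n n (\<lambda>(i, j). c i * A i j * d j))
     = (\<Prod>i<n. c i) * (\<Prod>j<n. d j) * Determinant.det (Matrix.mat n n (\<lambda>(i, j). A i j))"
proof -
  have "Determinant.det (Matrix.mat n n (\<lambda>(i, j). c i * A i j * d j))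
     = (\<Sum>p\<in>{p. p permutes {0..<n}}. signof p * (\<Prod>i=0..<n. c i * A i (p i) * d (p i)))"
    by (subst det_def'[of _ n]) auto
  also have "\<dots> = (\<Sum>p\<in>{p. p permutes {0..<n}}. (\<Prod>i<n. c i) * (\<Prod>j<n. d j) * (signof p * (\<Prod>i=0..<n. A i (p i))))"
  proof (rule sum.cong[OF refl])
    fix p assume p: "p \<in> {p. p permutes {0..<n}}"
    have "(\<Prod>i=0..<n. d (p i)) = (\<Prod>j=0..<n. d j)"
      using prod.permute[of p "{0..<n}" d] p by (simp add: comp_def)
    then show "signof p * (\<Prod>i=0..<n. c i * A i (p i) * d (p i)) = (\<Prod>i<n. c i) * (\<Prod>j<n. d j) * (signof p * (\<Prod>i=0..<n. A i (p i)))"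
      by (simp add: prod.distrib atLeast0LessThan mult_ac)
  qed
  also have "\<dots> = (\<Prod>i<n. c i) * (\<Prod>j<n. d j) * Determinant.det (Matrix.mat n n (\<lambda>(i, j). A i j))"
    by (subst det_def'[of _ n]) (auto simp: sum_distrib_left)
  finally show ?thesis .
qed

lemma det_first_row:
  fixes A :: "'a :: comm_ring_1 mat"
  assumes A: "A \<in> carrier_mat (Suc n) (Suc n)"
    and z: "\<And>j. 0 < j \<Longrightarrow> j < Suc n \<Longrightarrow> A $$ (0, j) = 0"
  shows "Determinant.det A = A $$ (0, 0) * Determinant.det (Matrix.mat n n (\<lambda>(i, j). A $$ (Suc i, Suc j)))"
proof -
  have "Determinant.det A = (\<Sum>j<Suc n. A $$ (0, j) * cofactor A 0 j)"
    by (rule laplace_expansion_row[OF A]) simp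
  also have "\<dots> = A $$ (0, 0) * cofactor A 0 0"
    by (subst sum.lessThan_Suc_shift) (simp add: z)
  finally have d: "Determinant.det A = A $$ (0, 0) * cofactor A 0 0" .
  have "mat_delete A 0 0 = Matrix.mat n n (\<lambda>(i, j). A $$ (Suc i, Suc j))"
    using A unfolding mat_delete_def by (intro eq_matI) auto
  then show ?thesis using d unfolding cofactor_def by simp
qed

fun V :: "nat \<Rightarrow> (nat \<Rightarrow> real) \<Rightarrow> real" where
  "V 0 a = 1"
| "V (Suc n) a = (\<Prod>k<n. a (Suc k) - a 0) * V n (\<lambda>k. a (Suc k))"

fun cp :: "nat \<Rightarrow> (nat \<Rightarrow> real) \<Rightarrow> (nat \<Rightarrow> real) \<Rightarrow> real" where
  "cp 0 a b = 1"
| "cp (Suc n) a b = (\<Prod>l<Suc n. 1 / (a 0 + b l)) * (\<Prod>k<n. 1 / (a (Suc k) + b 0))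
      * cp n (\<lambda>k. a (Suc k)) (\<lambda>l. b (Suc l))"

lemma V_nonzero: "inj_on a {..<n} \<Longrightarrow> V n a \<noteq> 0"
proof (induction n arbitrary: a)
  case 0 then show ?case by simp
next
  case (Suc n)
  have "inj_on (\<lambda>k. a (Suc k)) {..<n}"
    using Suc.prems by (auto simp: inj_on_def)
  then have "V n (\<lambda>k. a (Suc k)) \<noteq> 0" by (rule Suc.IH)
  moreover have "a (Suc k) - a 0 \<noteq> 0" if "k < n" for k
    using Suc.prems that by (auto simp: inj_on_def)
  ultimately show ?case by simp
qed

lemma cp_pos: "(\<And>k. k < n \<Longrightarrow> a k > 0) \<Longrightarrow> (\<And>k. k < n \<Longrightarrow> b k > 0) \<Longrightarrow> cp n a b > 0"
proof (induction n arbitrary: a b)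
  case 0 then show ?case by simp
next
  case (Suc n)
  have "cp n (\<lambda>k. a (Suc k)) (\<lambda>l. b (Suc l)) > 0"
    by (rule Suc.IH) (use Suc.prems in auto)
  moreover have "(\<Prod>l<Suc n. 1 / (a 0 + b l)) > 0"
    by (rule prod_pos) (use Suc.prems in \<open>auto intro!: add_pos_pos\<close>)
  moreover have "(\<Prod>k<n. 1 / (a (Suc k) + b 0)) > 0"
    by (rule prod_pos) (use Suc.prems in \<open>auto intro!: add_pos_pos\<close>)
  ultimately show ?case unfolding cp.simps by (metis mult_pos_pos)
qed

lemma vandermonde: "Determinant.det (Matrix.mat n n (\<lambda>(k, j). a k ^ j)) = V n a"
proof (induction n arbitrary: a)
  case 0 then show ?case by simp
next
  case (Suc n)
  define Va where "Va = Matrix.mat (Suc n) (Suc n) (\<lambda>(k, j). a k ^ j)"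
  define U where "U = Matrix.mat (Suc n) (Suc n) (\<lambda>(i, j). if i = j then 1 else if j = Suc i then - a 0 else (0::real))"
  have dU: "Determinant.det U = 1"
  proof -
    have "Determinant.det U = prod_list (diag_mat U)"
      by (rule det_upper_triangular[of _ "Suc n"]) (auto simp: U_def upper_triangular_def)
    also have "\<dots> = 1" unfolding prod_list_diag_prod by (rule prod.neutral) (simp add: U_def)
    finally show ?thesis .
  qed
  have ent: "(Va * U) $$ (k, j) = (if j = 0 then 1 else a k ^ j - a 0 * a k ^ (j - 1))"
    if "k < Suc n" "j < Suc n" for k j
  proof -
    have "(Va * U) $$ (k, j) = (\<Sum>m<Suc n. a k ^ m * (if m = j then 1 else if j = Suc m then - a 0 else 0))"
      unfolding Va_def U_def using that by (subst mat_mult_entry) (auto intro!: sum.cong)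
    also have "\<dots> = (\<Sum>m<Suc n. (if m = j then a k ^ m else 0) + (if j = Suc m then - a 0 * a k ^ m else 0))"
      by (rule sum.cong) auto
    also have "\<dots> = (if j = 0 then 1 else a k ^ j - a 0 * a k ^ (j - 1))"
      using that by (cases j) (auto simp: sum.distrib)
    finally show ?thesis .
  qed
  have "Determinant.det Va = Determinant.det (Va * U)"
  proof -
    have "Determinant.det (Va * U) = Determinant.det Va * Determinant.det U"
      by (rule det_mult[of _ "Suc n"]) (simp_all only: Va_def U_def mat_carrier)
    then show ?thesis using dU by simp
  qed
  also have "\<dots> = (Va * U) $$ (0, 0) * Determinant.det (Matrix.mat n n (\<lambda>(i, j). (Va * U) $$ (Suc i, Suc j)))"
  proof (rule det_first_row)
    show "Va * U \<in> carrier_mat (Suc n) (Suc n)" unfolding Va_def U_def by (rule mult_carrier_mat) auto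
    fix j assume "0 < j" "j < Suc n"
    then show "(Va * U) $$ (0, j) = 0" using ent[of 0 j] by (cases j) simp_all
  qed
  also have "Matrix.mat n n (\<lambda>(i, j). (Va * U) $$ (Suc i, Suc j))
      = Matrix.mat n n (\<lambda>(i, j). (a (Suc i) - a 0) * a (Suc i) ^ j * 1)"
    by (rule eq_matI) (simp_all add: ent left_diff_distrib)
  also have "Determinant.det \<dots> = (\<Prod>i<n. a (Suc i) - a 0) * Determinant.det (Matrix.mat n n (\<lambda>(i, j). a (Suc i) ^ j))"
    using det_scale_rc[of n "\<lambda>i. a (Suc i) - a 0" "\<lambda>i j. a (Suc i) ^ j" "\<lambda>_. 1"] by simp
  finally have "Determinant.det Va = (Va * U) $$ (0, 0) * ((\<Prod>i<n. a (Suc i) - a 0) * V n (\<lambda>i. a (Suc i)))"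
    using Suc.IH[of "\<lambda>i. a (Suc i)"] by simp
  moreover have "(Va * U) $$ (0, 0) = 1" using ent[of 0 0] by simp
  ultimately show ?case by (simp add: Va_def)
qed

lemma cauchy_alg:
  fixes A a B b :: real
  assumes "A > 0" "a > 0" "B > 0" "b > 0"
  shows "(1/(A+B) - 1/(a+B)) - (a+b)/(a+B) * (1/(A+b) - 1/(a+b)) = ((A-a)*(1/(A+b))) * (1/(A+B)) * ((B-b)*(1/(a+B)))"
proof -
  have nz: "A+B \<noteq> 0" "a+B \<noteq> 0" "A+b \<noteq> 0" "a+b \<noteq> 0" using assms by auto
  show ?thesis using nz by (simp add: divide_simps) (simp add: algebra_simps)
qed

lemma cauchy_det:
  assumes "\<And>k. k < n \<Longrightarrow> a k > 0" "\<And>k. k < n \<Longrightarrow> b k > 0"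
  shows "Determinant.det (Matrix.mat n n (\<lambda>(k, l). 1 / (a k + b l))) = V n a * V n b * cp n a b"
  using assms
proof (induction n arbitrary: a b)
  case 0 then show ?case by simp
next
  case (Suc n)
  have pa: "a k > 0" if "k < Suc n" for k using Suc.prems that by auto
  have pb: "b k > 0" if "k < Suc n" for k using Suc.prems that by auto
  have nz: "a k + b l \<noteq> 0" if "k < Suc n" "l < Suc n" for k l
    using pa[OF that(1)] pb[OF that(2)] by simp
  define C where "C = Matrix.mat (Suc n) (Suc n) (\<lambda>(k, l). 1 / (a k + b l))"
  define L where "L = Matrix.mat (Suc n) (Suc n) (\<lambda>(i, j). if i = j then 1 else if j = 0 then -1 else (0::real))"
  define r where "r l = (a 0 + b 0) / (a 0 + b l)" for l
  define R where "R = Matrix.mat (Suc n) (Suc n) (\<lambda>(i, j). if i = j then 1 else if i = 0 then - r j else (0::real))"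
  have cL: "L \<in> carrier_mat (Suc n) (Suc n)" and cC: "C \<in> carrier_mat (Suc n) (Suc n)"
    and cR: "R \<in> carrier_mat (Suc n) (Suc n)" by (simp_all add: L_def C_def R_def)
  have dL: "Determinant.det L = 1"
  proof -
    have "Determinant.det L = prod_list (diag_mat L)"
      by (rule det_lower_triangular[of "Suc n"]) (auto simp: L_def)
    also have "\<dots> = 1" unfolding prod_list_diag_prod by (rule prod.neutral) (simp add: L_def)
    finally show ?thesis .
  qed
  have dR: "Determinant.det R = 1"
  proof -
    have "Determinant.det R = prod_list (diag_mat R)"
      by (rule det_upper_triangular[of _ "Suc n"]) (auto simp: R_def upper_triangular_def)
    also have "\<dots> = 1" unfolding prod_list_diag_prod by (rule prod.neutral) (simp add: R_def)
    finally show ?thesis .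
  qed
  have eLC: "(L * C) $$ (k, l) = 1 / (a k + b l) - (if k = 0 then 0 else 1 / (a 0 + b l))"
    if "k < Suc n" "l < Suc n" for k l
  proof -
    have "(L * C) $$ (k, l) = (\<Sum>m<Suc n. (if k = m then 1 else if m = 0 then -1 else 0) * (1 / (a m + b l)))"
      unfolding L_def C_def using that by (subst mat_mult_entry) (auto intro!: sum.cong)
    also have "\<dots> = (\<Sum>m<Suc n. (if m = k then 1 / (a m + b l) else 0) + (if m = 0 \<and> k \<noteq> 0 then - (1 / (a m + b l)) else 0))"
      by (rule sum.cong) auto
    also have "\<dots> = 1 / (a k + b l) - (if k = 0 then 0 else 1 / (a 0 + b l))"
      using that by (simp add: sum.distrib)
    finally show ?thesis .
  qed
  have cLC: "L * C \<in> carrier_mat (Suc n) (Suc n)" using cL cC by (rule mult_carrier_mat)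
  have eB: "(L * C * R) $$ (k, l) = (L * C) $$ (k, l) - (if l = 0 then 0 else r l * (L * C) $$ (k, 0))"
    if "k < Suc n" "l < Suc n" for k l
  proof -
    have "(L * C * R) $$ (k, l) = (\<Sum>m<Suc n. (L * C) $$ (k, m) * R $$ (m, l))"
      using that by (rule mat_mult_entry2[OF cLC cR])
    also have "\<dots> = (\<Sum>m<Suc n. (if m = l then (L * C) $$ (k, m) else 0) + (if m = 0 \<and> l \<noteq> 0 then - (r l * (L * C) $$ (k, m)) else 0))"
      by (rule sum.cong) (use that in \<open>auto simp: R_def\<close>)
    also have "\<dots> = (L * C) $$ (k, l) - (if l = 0 then 0 else r l * (L * C) $$ (k, 0))"
      using that by (simp add: sum.distrib)
    finally show ?thesis .
  qed
  define c where "c k = (a (Suc k) - a 0) * (1 / (a (Suc k) + b 0))" for k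
  define d where "d l = (b (Suc l) - b 0) * (1 / (a 0 + b (Suc l)))" for l
  have "Determinant.det C = Determinant.det (L * C * R)"
  proof -
    have "Determinant.det (L * C * R) = Determinant.det (L * C) * Determinant.det R"
      by (rule det_mult[OF cLC cR])
    also have "Determinant.det (L * C) = Determinant.det L * Determinant.det C"
      by (rule det_mult[OF cL cC])
    finally show ?thesis using dL dR by simp
  qed
  also have "\<dots> = (L * C * R) $$ (0, 0) * Determinant.det (Matrix.mat n n (\<lambda>(i, j). (L * C * R) $$ (Suc i, Suc j)))"
  proof (rule det_first_row)
    show "L * C * R \<in> carrier_mat (Suc n) (Suc n)" using cLC cR by (rule mult_carrier_mat)
    fix j assume j: "0 < j" "j < Suc n"
    have "a 0 + b j \<noteq> 0" "a 0 + b 0 \<noteq> 0" using nz j by auto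
    then show "(L * C * R) $$ (0, j) = 0" using j by (simp add: eB eLC r_def)
  qed
  also have "Matrix.mat n n (\<lambda>(i, j). (L * C * R) $$ (Suc i, Suc j))
      = Matrix.mat n n (\<lambda>(i, j). c i * (1 / (a (Suc i) + b (Suc j))) * d j)"
  proof (rule eq_matI)
    fix i j assume ij: "i < dim_row (Matrix.mat n n (\<lambda>(i, j). c i * (1 / (a (Suc i) + b (Suc j))) * d j))"
      "j < dim_col (Matrix.mat n n (\<lambda>(i, j). c i * (1 / (a (Suc i) + b (Suc j))) * d j))"
    then have i: "i < n" and j: "j < n" by auto
    have p1: "a (Suc i) > 0" "a 0 > 0" using pa i by auto
    have p2: "b (Suc j) > 0" "b 0 > 0" using pb j by auto
    have "(L * C * R) $$ (Suc i, Suc j) = (1 / (a (Suc i) + b (Suc j)) - 1 / (a 0 + b (Suc j)))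
        - r (Suc j) * (1 / (a (Suc i) + b 0) - 1 / (a 0 + b 0))"
      using i j by (simp add: eB eLC)
    also have "\<dots> = c i * (1 / (a (Suc i) + b (Suc j))) * d j"
      unfolding c_def d_def r_def using cauchy_alg[OF p1(1) p1(2) p2(1) p2(2)] by simp
    finally show "Matrix.mat n n (\<lambda>(i, j). (L * C * R) $$ (Suc i, Suc j)) $$ (i, j)
       = Matrix.mat n n (\<lambda>(i, j). c i * (1 / (a (Suc i) + b (Suc j))) * d j) $$ (i, j)"
      using i j by simp
  qed auto
  also have "Determinant.det \<dots> = (\<Prod>i<n. c i) * (\<Prod>j<n. d j)
      * Determinant.det (Matrix.mat n n (\<lambda>(i, j). 1 / (a (Suc i) + b (Suc j))))"
    using det_scale_rc[of n c "\<lambda>i j. 1 / (a (Suc i) + b (Suc j))" d] by simp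
  also have "Determinant.det (Matrix.mat n n (\<lambda>(i, j). 1 / (a (Suc i) + b (Suc j))))
      = V n (\<lambda>k. a (Suc k)) * V n (\<lambda>k. b (Suc k)) * cp n (\<lambda>k. a (Suc k)) (\<lambda>k. b (Suc k))"
    using Suc.IH[of "\<lambda>k. a (Suc k)" "\<lambda>k. b (Suc k)"] pa pb by simp
  also have "(L * C * R) $$ (0, 0) = 1 / (a 0 + b 0)" by (simp add: eB eLC)
  finally have F1: "Determinant.det C = 1 / (a 0 + b 0) * ((\<Prod>i<n. c i) * (\<Prod>j<n. d j) *
      (V n (\<lambda>k. a (Suc k)) * V n (\<lambda>k. b (Suc k)) * cp n (\<lambda>k. a (Suc k)) (\<lambda>k. b (Suc k))))" .
  moreover have F2: "(\<Prod>i<n. c i) = (\<Prod>k<n. a (Suc k) - a 0) * (\<Prod>k<n. 1 / (a (Suc k) + b 0))"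
    unfolding c_def by (rule prod.distrib)
  moreover have F3: "(\<Prod>j<n. d j) = (\<Prod>k<n. b (Suc k) - b 0) * (\<Prod>k<n. 1 / (a 0 + b (Suc k)))"
    unfolding d_def by (rule prod.distrib)
  moreover have F4: "(\<Prod>l<Suc n. 1 / (a 0 + b l)) = 1 / (a 0 + b 0) * (\<Prod>k<n. 1 / (a 0 + b (Suc k)))"
    by (rule prod.lessThan_Suc_shift)
  ultimately have "Determinant.det C = (\<Prod>k<n. a (Suc k) - a 0) * V n (\<lambda>k. a (Suc k)) *
      ((\<Prod>k<n. b (Suc k) - b 0) * V n (\<lambda>k. b (Suc k))) *
      ((\<Prod>l<Suc n. 1 / (a 0 + b l)) * (\<Prod>k<n. 1 / (a (Suc k) + b 0)) * cp n (\<lambda>k. a (Suc k)) (\<lambda>l. b (Suc l)))"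
    unfolding F1 F2 F3 F4 by (simp only: mult_ac)
  then show ?case unfolding C_def V.simps cp.simps .
qed


definition dm :: "nat \<Rightarrow> (nat \<Rightarrow> 'a \<Rightarrow> real) \<Rightarrow> (nat \<Rightarrow> 'a) \<Rightarrow> real" where
  "dm n \<phi> X = Determinant.det (Matrix.mat n n (\<lambda>(k, i). \<phi> i (X k)))"

lemma dm_leibniz: "dm n \<phi> X = (\<Sum>p\<in>{p. p permutes {0..<n}}. signof p * (\<Prod>k=0..<n. \<phi> (p k) (X k)))"
  unfolding dm_def by (subst det_def'[of _ n]) auto

lemma dm_leibniz2: "dm n \<phi> X = (\<Sum>p\<in>{p. p permutes {0..<n}}. signof p * (\<Prod>i=0..<n. \<phi> i (X (p i))))"
proof -
  have "dm n \<phi> X = Determinant.det (transpose_mat (Matrix.mat n n (\<lambda>(k, i). \<phi> i (X k))))"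
    unfolding dm_def by (subst det_transpose[of _ n]) auto
  also have "transpose_mat (Matrix.mat n n (\<lambda>(k, i). \<phi> i (X k))) = Matrix.mat n n (\<lambda>(i, k). \<phi> i (X k))"
    by (rule eq_matI) auto
  also have "Determinant.det \<dots> = (\<Sum>p\<in>{p. p permutes {0..<n}}. signof p * (\<Prod>i=0..<n. \<phi> i (X (p i))))"
    by (subst det_def'[of _ n]) auto
  finally show ?thesis .
qed

lemma dm_cong: "(\<And>k. k < n \<Longrightarrow> X k = Y k) \<Longrightarrow> dm n \<phi> X = dm n \<phi> Y"
  unfolding dm_def by (rule arg_cong[where f = Determinant.det], rule eq_matI) auto

lemma dm_perm: assumes "\<pi> permutes {0..<n}"
  shows "dm n \<phi> (\<lambda>k. X (\<pi> k)) = signof \<pi> * dm n \<phi> X"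
proof -
  have "dm n \<phi> (\<lambda>k. X (\<pi> k)) = Determinant.det (Matrix.mat n n (\<lambda>(i, j). Matrix.mat n n (\<lambda>(k, i). \<phi> i (X k)) $$ (\<pi> i, j)))"
    unfolding dm_def using permutes_in_image[OF assms]
    by (intro arg_cong[where f = Determinant.det] eq_matI) auto
  also have "\<dots> = signof \<pi> * dm n \<phi> X"
    unfolding dm_def by (rule det_permute_rows[OF _ assms]) auto
  finally show ?thesis .
qed

lemma abs_prod_le_pow:
  fixes f :: "nat \<Rightarrow> real"
  assumes "\<And>k. k < n \<Longrightarrow> \<bar>f k\<bar> \<le> B"
  shows "\<bar>\<Prod>k=0..<n. f k\<bar> \<le> B ^ n"
proof -
  have "\<bar>\<Prod>k=0..<n. f k\<bar> = (\<Prod>k=0..<n. \<bar>f k\<bar>)" by (simp add: abs_prod)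
  also have "\<dots> \<le> (\<Prod>k=0..<n. B)"
    by (rule prod_mono) (use assms in auto)
  finally show ?thesis by simp
qed

lemma dm_bound:
  assumes "\<And>i k. i < n \<Longrightarrow> k < n \<Longrightarrow> \<bar>\<phi> i (X k)\<bar> \<le> B"
  shows "\<bar>dm n \<phi> X\<bar> \<le> fact n * B ^ n"
proof -
  have "\<bar>dm n \<phi> X\<bar> \<le> (\<Sum>p\<in>{p. p permutes {0..<n}}. \<bar>signof p * (\<Prod>k=0..<n. \<phi> (p k) (X k))\<bar>)"
    unfolding dm_leibniz by (rule sum_abs)
  also have "\<dots> \<le> (\<Sum>p\<in>{p. p permutes {0..<n}}. B ^ n)"
  proof (rule sum_mono)
    fix p assume p: "p \<in> {p. p permutes {0..<n}}"
    have "\<bar>signof p * (\<Prod>k=0..<n. \<phi> (p k) (X k))\<bar> = \<bar>\<Prod>k=0..<n. \<phi> (p k) (X k)\<bar>"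
      by (simp add: abs_mult sign_def)
    also have "\<dots> \<le> B ^ n"
      by (rule abs_prod_le_pow) (use p permutes_in_image assms in fastforce)
    finally show "\<bar>signof p * (\<Prod>k=0..<n. \<phi> (p k) (X k))\<bar> \<le> B ^ n" .
  qed
  also have "\<dots> = fact n * B ^ n"
    using card_permutations[of "{0..<n}" n] by simp
  finally show ?thesis .
qed

lemma dm_measurable:
  assumes "\<And>i. i < n \<Longrightarrow> \<phi> i \<in> borel_measurable M"
  shows "(\<lambda>X. dm n \<phi> X) \<in> borel_measurable (Pi\<^sub>M {..<n} (\<lambda>_. M))"
proof -
  have "(\<lambda>X. \<Sum>p\<in>{p. p permutes {0..<n}}. signof p * (\<Prod>k=0..<n. \<phi> (p k) (X k))) \<in> borel_measurable (Pi\<^sub>M {..<n} (\<lambda>_. M))"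
  proof (intro borel_measurable_sum borel_measurable_times borel_measurable_const borel_measurable_prod)
    fix p k assume p: "p \<in> {p. p permutes {0..<n}}" and k: "k \<in> {0..<n}"
    then have pk: "p k < n" using permutes_in_image by fastforce
    show "(\<lambda>X. \<phi> (p k) (X k)) \<in> borel_measurable (Pi\<^sub>M {..<n} (\<lambda>_. M))"
      using measurable_compose[OF measurable_component_singleton[of k "{..<n}" "\<lambda>_. M"] assms[OF pk]] k by simp
  qed
  then show ?thesis unfolding dm_leibniz .
qed

lemma prodX_measurable:
  fixes \<phi> :: "nat \<Rightarrow> 'a \<Rightarrow> real"
  assumes "\<And>i. i < n \<Longrightarrow> \<phi> i \<in> borel_measurable M" "\<And>i. i < n \<Longrightarrow> q i < n"
  shows "(\<lambda>X. \<Prod>i=0..<n. \<phi> i (X (q i))) \<in> borel_measurable (Pi\<^sub>M {..<n} (\<lambda>_. M))"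
proof (intro borel_measurable_prod)
  fix i assume i: "i \<in> {0..<n}"
  show "(\<lambda>X. \<phi> i (X (q i))) \<in> borel_measurable (Pi\<^sub>M {..<n} (\<lambda>_. M))"
    using measurable_compose[OF measurable_component_singleton[of "q i" "{..<n}" "\<lambda>_. M"] assms(1)[of i]] i assms(2)[of i] by simp
qed

lemma andreief:
  fixes M :: "'a measure" and \<phi> \<psi> :: "nat \<Rightarrow> 'a \<Rightarrow> real"
  assumes M: "prob_space M"
    and \<phi>m: "\<And>i. i < n \<Longrightarrow> \<phi> i \<in> borel_measurable M"
    and \<psi>m: "\<And>i. i < n \<Longrightarrow> \<psi> i \<in> borel_measurable M"
    and \<phi>b: "\<And>i x. i < n \<Longrightarrow> x \<in> space M \<Longrightarrow> \<bar>\<phi> i x\<bar> \<le> B"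
    and \<psi>b: "\<And>i x. i < n \<Longrightarrow> x \<in> space M \<Longrightarrow> \<bar>\<psi> i x\<bar> \<le> B"
  shows "fact n * Determinant.det (Matrix.mat n n (\<lambda>(i, j). \<integral>x. \<phi> i x * \<psi> j x \<partial>M))
    = (\<integral>X. dm n \<phi> X * dm n \<psi> X \<partial>(Pi\<^sub>M {..<n} (\<lambda>_. M)))"
proof -
  interpret M: prob_space M by (rule M)
  let ?P = "Pi\<^sub>M {..<n} (\<lambda>_. M)"
  interpret P: prob_space ?P by (rule prob_space_PiM) (rule M)
  interpret PS: product_sigma_finite "\<lambda>_. M"
    by unfold_locales
  have spX: "X k \<in> space M" if "X \<in> space ?P" "k < n" for X k
    using that by (auto simp: space_PiM PiE_iff)
  have intP: "integrable ?P F" if "F \<in> borel_measurable ?P" "\<And>X. X \<in> space ?P \<Longrightarrow> \<bar>F X\<bar> \<le> C" for F :: "(nat \<Rightarrow> 'a) \<Rightarrow> real" and C :: real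
    by (rule P.integrable_const_bound[where B = C]) (use that in auto)
  have intM: "integrable M F" if "F \<in> borel_measurable M" "\<And>x. x \<in> space M \<Longrightarrow> \<bar>F x\<bar> \<le> C" for F :: "'a \<Rightarrow> real" and C :: real
    by (rule M.integrable_const_bound[where B = C]) (use that in auto)
  have bprod: "\<bar>\<Prod>i=0..<n. f i\<bar> \<le> \<bar>B\<bar> ^ n" if "\<And>i. i < n \<Longrightarrow> \<bar>f i\<bar> \<le> \<bar>B\<bar>" for f :: "nat \<Rightarrow> real"
    by (rule abs_prod_le_pow) (use that in auto)
  have \<phi>b': "\<bar>\<phi> i x\<bar> \<le> \<bar>B\<bar>" if "i < n" "x \<in> space M" for i x using \<phi>b[OF that] by simp
  have \<psi>b': "\<bar>\<psi> i x\<bar> \<le> \<bar>B\<bar>" if "i < n" "x \<in> space M" for i x using \<psi>b[OF that] by simp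
  have dmb: "\<bar>dm n f X\<bar> \<le> fact n * \<bar>B\<bar> ^ n" if "X \<in> space ?P" "\<And>i x. i < n \<Longrightarrow> x \<in> space M \<Longrightarrow> \<bar>f i x\<bar> \<le> \<bar>B\<bar>" for f X
    by (rule dm_bound) (use that spX in auto)
  have perm_lt: "p i < n" if "p permutes {..<n}" "i < n" for p i
    using permutes_in_image[OF that(1)] that(2) by simp
  define Phi where "Phi q X = (\<Prod>i=0..<n. \<phi> i (X (q i)))" for q :: "nat \<Rightarrow> nat" and X :: "nat \<Rightarrow> 'a"
  have Phi_m: "Phi q \<in> borel_measurable ?P" if "\<And>i. i < n \<Longrightarrow> q i < n" for q
    unfolding Phi_def by (rule prodX_measurable) (use \<phi>m that in auto)
  have Phi_b: "\<bar>Phi q X\<bar> \<le> \<bar>B\<bar> ^ n" if "\<And>i. i < n \<Longrightarrow> q i < n" "X \<in> space ?P" for q X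
    unfolding Phi_def by (rule bprod) (use \<phi>b' spX that in auto)
  have D_m: "(\<lambda>X. dm n \<psi> X) \<in> borel_measurable ?P" by (rule dm_measurable) (use \<psi>m in auto)
  have D_b: "\<bar>dm n \<psi> X\<bar> \<le> fact n * \<bar>B\<bar> ^ n" if "X \<in> space ?P" for X
    by (rule dmb) (use that \<psi>b' in auto)
  have G_int: "integrable ?P (\<lambda>X. c * Phi q X * dm n \<psi> X)" if "\<And>i. i < n \<Longrightarrow> q i < n" for q c
  proof (rule intP[of _ "\<bar>c\<bar> * (\<bar>B\<bar> ^ n * (fact n * \<bar>B\<bar> ^ n))"])
    show "(\<lambda>X. c * Phi q X * dm n \<psi> X) \<in> borel_measurable ?P" by (intro borel_measurable_times borel_measurable_const Phi_m D_m that)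
    fix X assume X: "X \<in> space ?P"
    have "\<bar>c * Phi q X * dm n \<psi> X\<bar> = \<bar>c\<bar> * (\<bar>Phi q X\<bar> * \<bar>dm n \<psi> X\<bar>)" by (simp add: abs_mult)
    also have "\<dots> \<le> \<bar>c\<bar> * (\<bar>B\<bar> ^ n * (fact n * \<bar>B\<bar> ^ n))"
      by (intro mult_left_mono mult_mono Phi_b D_b X that abs_ge_zero zero_le_power)
    finally show "\<bar>c * Phi q X * dm n \<psi> X\<bar> \<le> \<bar>c\<bar> * (\<bar>B\<bar> ^ n * (fact n * \<bar>B\<bar> ^ n))" .
  qed
  have s1: "Determinant.det (Matrix.mat n n (\<lambda>(i, j). \<integral>x. \<phi> i x * \<psi> j x \<partial>M))
      = (\<integral>X. 1 * Phi (\<lambda>i. i) X * dm n \<psi> X \<partial>?P)"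
  proof -
    have "Determinant.det (Matrix.mat n n (\<lambda>(i, j). \<integral>x. \<phi> i x * \<psi> j x \<partial>M))
       = (\<Sum>p\<in>{p. p permutes {..<n}}. signof p * (\<Prod>i\<in>{..<n}. \<integral>x. \<phi> i x * \<psi> (p i) x \<partial>M))"
    proof -
      have "Determinant.det (Matrix.mat n n (\<lambda>(i, j). \<integral>x. \<phi> i x * \<psi> j x \<partial>M))
        = (\<Sum>p\<in>{p. p permutes {..<n}}. signof p * (\<Prod>i\<in>{..<n}. Matrix.mat n n (\<lambda>(i, j). \<integral>x. \<phi> i x * \<psi> j x \<partial>M) $$ (i, p i)))"
        by (subst det_def'[of _ n]) (simp_all only: atLeast0LessThan mat_carrier)
      also have "\<dots> = (\<Sum>p\<in>{p. p permutes {..<n}}. signof p * (\<Prod>i\<in>{..<n}. \<integral>x. \<phi> i x * \<psi> (p i) x \<partial>M))"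
      proof (rule sum.cong[OF refl])
        fix p assume "p \<in> {p. p permutes {..<n}}"
        then have "p permutes {..<n}" by simp
        then show "signof p * (\<Prod>i\<in>{..<n}. Matrix.mat n n (\<lambda>(i, j). \<integral>x. \<phi> i x * \<psi> j x \<partial>M) $$ (i, p i))
          = signof p * (\<Prod>i\<in>{..<n}. \<integral>x. \<phi> i x * \<psi> (p i) x \<partial>M)"
          using perm_lt by (intro arg_cong[where f = "\<lambda>x. signof p * x"] prod.cong refl) simp
      qed
      finally show ?thesis .
    qed
    also have "\<dots> = (\<Sum>p\<in>{p. p permutes {..<n}}. signof p * (\<integral>X. (\<Prod>i\<in>{..<n}. \<phi> i (X i) * \<psi> (p i) (X i)) \<partial>?P))"
    proof (rule sum.cong[OF refl])
      fix p assume p: "p \<in> {p. p permutes {..<n}}"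
      have "(\<integral>X. (\<Prod>i\<in>{..<n}. \<phi> i (X i) * \<psi> (p i) (X i)) \<partial>?P) = (\<Prod>i\<in>{..<n}. \<integral>x. \<phi> i x * \<psi> (p i) x \<partial>M)"
      proof (rule PS.product_integral_prod[of "{..<n}" "\<lambda>i x. \<phi> i x * \<psi> (p i) x"])
        fix i assume i: "i \<in> {..<n}"
        then have pi: "p i < n" using perm_lt p by auto
        show "integrable M (\<lambda>x. \<phi> i x * \<psi> (p i) x)"
        proof (rule intM[of _ "\<bar>B\<bar> * \<bar>B\<bar>"])
          show "(\<lambda>x. \<phi> i x * \<psi> (p i) x) \<in> borel_measurable M" using \<phi>m \<psi>m i pi by auto
          fix x assume "x \<in> space M"
          then show "\<bar>\<phi> i x * \<psi> (p i) x\<bar> \<le> \<bar>B\<bar> * \<bar>B\<bar>"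
            unfolding abs_mult using \<phi>b' \<psi>b' i pi by (intro mult_mono) auto
        qed
      qed simp
      then show "signof p * (\<Prod>i\<in>{..<n}. \<integral>x. \<phi> i x * \<psi> (p i) x \<partial>M)
          = signof p * (\<integral>X. (\<Prod>i\<in>{..<n}. \<phi> i (X i) * \<psi> (p i) (X i)) \<partial>?P)" by simp
    qed
    also have "\<dots> = (\<Sum>p\<in>{p. p permutes {..<n}}. (\<integral>X. signof p * (\<Prod>i\<in>{..<n}. \<phi> i (X i) * \<psi> (p i) (X i)) \<partial>?P))"
      by simp
    also have "\<dots> = (\<integral>X. (\<Sum>p\<in>{p. p permutes {..<n}}. signof p * (\<Prod>i\<in>{..<n}. \<phi> i (X i) * \<psi> (p i) (X i))) \<partial>?P)"
    proof (rule Bochner_Integration.integral_sum[symmetric])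
      fix p assume p: "p \<in> {p. p permutes {..<n}}"
      have pp: "p permutes {..<n}" using p by simp
      have pl: "p i < n" if "i < n" for i using perm_lt[OF pp that] .
      have "integrable ?P (\<lambda>X. signof p * Phi (\<lambda>i. i) X * (\<Prod>i=0..<n. \<psi> (p i) (X i)))"
      proof (rule intP[of _ "\<bar>B\<bar> ^ n * \<bar>B\<bar> ^ n"])
        have pm: "(\<lambda>X. \<Prod>i=0..<n. \<psi> (p i) (X i)) \<in> borel_measurable ?P"
          by (rule prodX_measurable[of n "\<lambda>i. \<psi> (p i)" M "\<lambda>i. i"]) (simp_all add: \<psi>m pl)
        show "(\<lambda>X. signof p * Phi (\<lambda>i. i) X * (\<Prod>i=0..<n. \<psi> (p i) (X i))) \<in> borel_measurable ?P"
          by (intro borel_measurable_times borel_measurable_const Phi_m pm)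
        fix X assume X: "X \<in> space ?P"
        have h2: "\<bar>\<Prod>i=0..<n. \<psi> (p i) (X i)\<bar> \<le> \<bar>B\<bar> ^ n"
          by (rule bprod) (simp add: \<psi>b' spX X pl)
        have h1: "\<bar>Phi (\<lambda>i. i) X\<bar> \<le> \<bar>B\<bar> ^ n" using Phi_b[of "\<lambda>i. i" X] X by simp
        have "\<bar>signof p * Phi (\<lambda>i. i) X * (\<Prod>i=0..<n. \<psi> (p i) (X i))\<bar>
            = \<bar>Phi (\<lambda>i. i) X\<bar> * \<bar>\<Prod>i=0..<n. \<psi> (p i) (X i)\<bar>"
          by (simp add: abs_mult sign_def)
        also have "\<dots> \<le> \<bar>B\<bar> ^ n * \<bar>B\<bar> ^ n"
          by (rule mult_mono[OF h1 h2]) simp_all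
        finally show "\<bar>signof p * Phi (\<lambda>i. i) X * (\<Prod>i=0..<n. \<psi> (p i) (X i))\<bar> \<le> \<bar>B\<bar> ^ n * \<bar>B\<bar> ^ n" .
      qed
      moreover have "(\<lambda>X. signof p * (\<Prod>i\<in>{..<n}. \<phi> i (X i) * \<psi> (p i) (X i)))
          = (\<lambda>X. signof p * Phi (\<lambda>i. i) X * (\<Prod>i=0..<n. \<psi> (p i) (X i)))"
        by (rule ext) (simp only: Phi_def prod.distrib atLeast0LessThan mult.assoc)
      ultimately show "integrable ?P (\<lambda>X. signof p * (\<Prod>i\<in>{..<n}. \<phi> i (X i) * \<psi> (p i) (X i)))"
        by simp
    qed
    also have "\<dots> = (\<integral>X. 1 * Phi (\<lambda>i. i) X * dm n \<psi> X \<partial>?P)"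
    proof (intro Bochner_Integration.integral_cong refl)
      fix X
      have "(\<Sum>p\<in>{p. p permutes {..<n}}. signof p * (\<Prod>i\<in>{..<n}. \<phi> i (X i) * \<psi> (p i) (X i)))
         = (\<Sum>p\<in>{p. p permutes {..<n}}. Phi (\<lambda>i. i) X * (signof p * (\<Prod>k=0..<n. \<psi> (p k) (X k))))"
      proof (rule sum.cong[OF refl])
        fix p
        show "signof p * (\<Prod>i\<in>{..<n}. \<phi> i (X i) * \<psi> (p i) (X i)) = Phi (\<lambda>i. i) X * (signof p * (\<Prod>k=0..<n. \<psi> (p k) (X k)))"
          unfolding Phi_def atLeast0LessThan prod.distrib by (simp only: mult_ac)
      qed
      also have "\<dots> = 1 * Phi (\<lambda>i. i) X * dm n \<psi> X"
        unfolding dm_leibniz sum_distrib_left[symmetric] by (simp add: atLeast0LessThan)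
      finally show "(\<Sum>p\<in>{p. p permutes {..<n}}. signof p * (\<Prod>i\<in>{..<n}. \<phi> i (X i) * \<psi> (p i) (X i)))
         = 1 * Phi (\<lambda>i. i) X * dm n \<psi> X" .
    qed
    finally show ?thesis .
  qed
  have s2: "(\<integral>X. 1 * Phi (\<lambda>i. i) X * dm n \<psi> X \<partial>?P) = (\<integral>X. signof \<pi> * Phi \<pi> X * dm n \<psi> X \<partial>?P)"
    if \<pi>: "\<pi> permutes {..<n}" for \<pi>
  proof -
    define T :: "(nat \<Rightarrow> 'a) \<Rightarrow> (nat \<Rightarrow> 'a)" where "T = (\<lambda>X. \<lambda>k\<in>{..<n}. X (\<pi> k))"
    have Tm: "T \<in> measurable ?P ?P"
      unfolding T_def by (rule measurable_restrict) (use perm_lt[OF \<pi>] in auto)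
    have distrT: "distr ?P ?P T = ?P"
    proof -
      have inj: "inj_on \<pi> {..<n}" using permutes_inj_on[OF \<pi>] .
      have pfun: "\<pi> \<in> {..<n} \<rightarrow> {..<n}" using perm_lt[OF \<pi>] by auto
      have "distr ?P (Pi\<^sub>M {..<n} (\<lambda>i. (\<lambda>_. M) (\<pi> i))) (\<lambda>\<omega>. \<lambda>n\<in>{..<n}. \<omega> (\<pi> n)) = Pi\<^sub>M {..<n} (\<lambda>i. (\<lambda>_. M) (\<pi> i))"
        by (rule distr_PiM_reindex[OF M inj pfun])
      then show ?thesis unfolding T_def by simp
    qed
    have Gm: "(\<lambda>X. 1 * Phi (\<lambda>i. i) X * dm n \<psi> X) \<in> borel_measurable ?P"
      by (intro borel_measurable_times borel_measurable_const Phi_m D_m) auto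
    have "(\<integral>X. 1 * Phi (\<lambda>i. i) X * dm n \<psi> X \<partial>?P) = (\<integral>X. 1 * Phi (\<lambda>i. i) X * dm n \<psi> X \<partial>distr ?P ?P T)"
      by (simp add: distrT)
    also have "\<dots> = (\<integral>X. 1 * Phi (\<lambda>i. i) (T X) * dm n \<psi> (T X) \<partial>?P)"
      by (rule integral_distr[OF Tm Gm])
    also have "\<dots> = (\<integral>X. signof \<pi> * Phi \<pi> X * dm n \<psi> X \<partial>?P)"
    proof (rule Bochner_Integration.integral_cong[OF refl])
      fix X assume "X \<in> space ?P"
      have "Phi (\<lambda>i. i) (T X) = Phi \<pi> X" unfolding Phi_def T_def by (intro prod.cong refl) simp
      moreover have "dm n \<psi> (T X) = dm n \<psi> (\<lambda>k. X (\<pi> k))" unfolding T_def by (rule dm_cong) auto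
      moreover have "dm n \<psi> (\<lambda>k. X (\<pi> k)) = signof \<pi> * dm n \<psi> X"
        by (rule dm_perm) (use \<pi> in \<open>simp add: atLeast0LessThan\<close>)
      ultimately show "1 * Phi (\<lambda>i. i) (T X) * dm n \<psi> (T X) = signof \<pi> * Phi \<pi> X * dm n \<psi> X" by simp
    qed
    finally show ?thesis .
  qed
  have card: "card {p. p permutes {..<n}} = fact n"
    using card_permutations[of "{..<n}" n] by simp
  have "fact n * (\<integral>X. 1 * Phi (\<lambda>i. i) X * dm n \<psi> X \<partial>?P)
      = (\<Sum>\<pi>\<in>{p. p permutes {..<n}}. (\<integral>X. 1 * Phi (\<lambda>i. i) X * dm n \<psi> X \<partial>?P))"
    using card by simp
  also have "\<dots> = (\<Sum>\<pi>\<in>{p. p permutes {..<n}}. (\<integral>X. signof \<pi> * Phi \<pi> X * dm n \<psi> X \<partial>?P))"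
    using s2 by (intro sum.cong) auto
  also have "\<dots> = (\<integral>X. (\<Sum>\<pi>\<in>{p. p permutes {..<n}}. signof \<pi> * Phi \<pi> X * dm n \<psi> X) \<partial>?P)"
    by (rule Bochner_Integration.integral_sum[symmetric]) (use G_int perm_lt in auto)
  also have "\<dots> = (\<integral>X. dm n \<phi> X * dm n \<psi> X \<partial>?P)"
    unfolding dm_leibniz2[of n \<phi>] Phi_def
    by (intro Bochner_Integration.integral_cong refl) (simp add: atLeast0LessThan sum_distrib_right)
  finally show ?thesis using s1 by simp
qed


abbreviation nu :: "real measure" where "nu \<equiv> restrict_space lborel {0<..<1}"

lemma nu_prob: "prob_space nu"
  by (rule prob_space_restrict_space) auto

lemma space_nu[simp]: "space nu = {0<..<1}"
  by (simp add: space_restrict_space)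

lemma V_zero: "\<not> inj_on a {..<n} \<Longrightarrow> V n a = 0"
proof (induction n arbitrary: a)
  case 0 then show ?case by simp
next
  case (Suc n)
  show ?case
  proof (cases "inj_on (\<lambda>k. a (Suc k)) {..<n}")
    case False
    then show ?thesis using Suc.IH[of "\<lambda>k. a (Suc k)"] by simp
  next
    case True
    have "\<exists>k<n. a (Suc k) = a 0"
    proof (rule ccontr)
      assume H: "\<not> (\<exists>k<n. a (Suc k) = a 0)"
      have "inj_on a {..<Suc n}"
      proof (rule inj_onI)
        fix x y assume x: "x \<in> {..<Suc n}" and y: "y \<in> {..<Suc n}" and xy: "a x = a y"
        show "x = y"
        proof (cases x; cases y)
          fix x' y' assume "x = Suc x'" "y = Suc y'"
          then show "x = y" using True x y xy by (auto simp: inj_on_def)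
        next
          fix x' assume "x = Suc x'" "y = 0"
          then show "x = y" using H x xy by auto
        next
          fix y' assume "x = 0" "y = Suc y'"
          then show "x = y" using H y xy by force
        qed simp
      qed
      then show False using Suc.prems by simp
    qed
    then obtain k where "k < n" "a (Suc k) = a 0" by blast
    then have "(\<Prod>k<n. a (Suc k) - a 0) = 0" by (intro prod_zero) auto
    then show ?thesis by simp
  qed
qed

lemma pos_PiM:
  fixes F :: "(nat \<Rightarrow> real) \<Rightarrow> real"
  assumes Fi: "integrable (Pi\<^sub>M {..<n} (\<lambda>_. nu)) F"
    and nn: "\<And>X. X \<in> space (Pi\<^sub>M {..<n} (\<lambda>_. nu)) \<Longrightarrow> 0 \<le> F X"
    and pos: "\<And>X. X \<in> space (Pi\<^sub>M {..<n} (\<lambda>_. nu)) \<Longrightarrow> inj_on X {..<n} \<Longrightarrow> 0 < F X"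
  shows "0 < (\<integral>X. F X \<partial>Pi\<^sub>M {..<n} (\<lambda>_. nu))"
proof -
  let ?P = "Pi\<^sub>M {..<n} (\<lambda>_. nu)"
  interpret N: prob_space nu by (rule nu_prob)
  interpret PS: product_sigma_finite "\<lambda>_. nu" by unfold_locales
  define I where "I k = {real k / real (Suc n) <..< (real k + 1) / real (Suc n)}" for k
  define Bx where "Bx = Pi\<^sub>E {..<n} I"
  have Isub: "I k \<subseteq> {0<..<1}" if "k < n" for k
  proof
    fix x assume "x \<in> I k"
    then have "real k / real (Suc n) < x" "x < (real k + 1) / real (Suc n)" by (auto simp: I_def)
    moreover have "0 \<le> real k / real (Suc n)" by simp
    moreover have "(real k + 1) / real (Suc n) \<le> 1" using that by (simp add: field_simps)
    ultimately have "0 < x" "x < 1" by linarith+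
    then show "x \<in> {0<..<1}" by simp
  qed
  have Imeas: "emeasure nu (I k) = ennreal (1 / real (Suc n))" if "k < n" for k
  proof -
    have "emeasure nu (I k) = emeasure lborel (I k)"
      by (rule emeasure_restrict_space) (use Isub[OF that] in auto)
    also have "\<dots> = ennreal ((real k + 1) / real (Suc n) - real k / real (Suc n))"
      unfolding I_def by (rule emeasure_lborel_Ioo) (simp add: divide_right_mono)
    also have "(real k + 1) / real (Suc n) - real k / real (Suc n) = 1 / real (Suc n)"
      by (simp add: field_simps)
    finally show ?thesis .
  qed
  have Isets: "I k \<in> sets nu" if "k < n" for k
  proof -
    have "I k \<in> sets lborel" by (simp add: I_def)
    then show ?thesis using Isub[OF that] by (simp add: sets_restrict_space_iff)
  qed
  have mB: "emeasure ?P Bx = (\<Prod>k\<in>{..<n}. emeasure nu (I k))"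
    unfolding Bx_def by (rule PS.emeasure_PiM) (auto intro: Isets)
  also have "\<dots> = (\<Prod>k\<in>{..<n}. ennreal (1 / real (Suc n)))"
    by (rule prod.cong) (auto simp: Imeas)
  finally have mBpos: "emeasure ?P Bx \<noteq> 0"
    by (simp add: prod_ennreal[symmetric])
  have Bsp: "Bx \<subseteq> space ?P"
    unfolding Bx_def space_PiM using Isub by (auto simp: PiE_iff)
  have Binj: "inj_on X {..<n}" if "X \<in> Bx" for X
  proof (rule inj_onI)
    fix i j assume i: "i \<in> {..<n}" and j: "j \<in> {..<n}" and e: "X i = X j"
    have Xi: "real i / real (Suc n) < X i" "X i < (real i + 1) / real (Suc n)"
      using that i by (auto simp: Bx_def I_def PiE_iff)
    have Xj: "real j / real (Suc n) < X j" "X j < (real j + 1) / real (Suc n)"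
      using that j by (auto simp: Bx_def I_def PiE_iff)
    show "i = j"
    proof (rule ccontr)
      assume "i \<noteq> j"
      then consider "i + 1 \<le> j" | "j + 1 \<le> i" by linarith
      then show False
      proof cases
        case 1
        then have "(real i + 1) / real (Suc n) \<le> real j / real (Suc n)"
          by (intro divide_right_mono) auto
        then show False using Xi Xj e by linarith
      next
        case 2
        then have "(real j + 1) / real (Suc n) \<le> real i / real (Suc n)"
          by (intro divide_right_mono) auto
        then show False using Xi Xj e by linarith
      qed
    qed
  qed
  have "0 \<le> (\<integral>X. F X \<partial>?P)" using nn by (rule Bochner_Integration.integral_nonneg)
  moreover have "(\<integral>X. F X \<partial>?P) \<noteq> 0"
  proof
    assume "(\<integral>X. F X \<partial>?P) = 0"
    then have "AE X in ?P. F X = 0"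
      using integral_nonneg_eq_0_iff_AE[OF Fi] nn by (auto intro: AE_I2)
    then have "AE X in ?P. X \<notin> Bx"
    proof (rule AE_mp[OF _ AE_I2], intro impI)
      fix X assume "X \<in> space ?P" "F X = 0"
      then show "X \<notin> Bx" using pos Binj by force
    qed
    then have "emeasure ?P {X \<in> space ?P. X \<in> Bx} = 0"
      by (intro emeasure_eq_0_AE) simp
    moreover have "{X \<in> space ?P. X \<in> Bx} = Bx" using Bsp by auto
    ultimately show False using mBpos by simp
  qed
  ultimately show ?thesis by simp
qed

definition W :: "nat \<Rightarrow> real \<Rightarrow> real" where "W t x = ((1 - x) / (1 + x)) ^ t"

lemma W_pos: "0 < x \<Longrightarrow> x < 1 \<Longrightarrow> 0 < W t x"
  unfolding W_def by simp

lemma W_le1: "0 < x \<Longrightarrow> x < 1 \<Longrightarrow> W t x \<le> 1"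
  unfolding W_def by (rule power_le_one) (auto simp: field_simps)

lemma W_meas[measurable]: "W t \<in> borel_measurable borel"
  unfolding W_def by measurable

definition ff :: "nat \<Rightarrow> nat \<Rightarrow> nat \<Rightarrow> nat \<Rightarrow> real \<Rightarrow> real" where
  "ff s t a i x = x ^ (s + (i + a)) * W t x"
definition gg :: "nat \<Rightarrow> nat \<Rightarrow> nat \<Rightarrow> real \<Rightarrow> real" where
  "gg s t j y = y ^ (s + Suc j) * W t y"
definition hh :: "nat \<Rightarrow> nat \<Rightarrow> nat \<Rightarrow> real \<Rightarrow> real" where
  "hh s t j x = (\<integral>y. 1 / (x + y) * gg s t j y \<partial>nu)"

lemma ff_bound: "0 < x \<Longrightarrow> x < 1 \<Longrightarrow> \<bar>ff s t a i x\<bar> \<le> 1"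
  unfolding ff_def using W_pos[of x t] W_le1[of x t]
  by (simp add: abs_mult power_le_one mult_le_one)

lemma ff_pos: "0 < x \<Longrightarrow> x < 1 \<Longrightarrow> 0 < ff s t a i x"
  unfolding ff_def using W_pos[of x t] by simp

lemma gg_bound: "0 < y \<Longrightarrow> y < 1 \<Longrightarrow> \<bar>gg s t j y\<bar> \<le> y"
proof -
  assume y: "0 < y" "y < 1"
  have "y ^ (s + Suc j) \<le> y ^ 1" by (rule power_decreasing) (use y in auto)
  then show ?thesis unfolding gg_def using W_pos[of y t] W_le1[of y t] y
    by (simp add: abs_mult) (metis mult_le_one less_eq_real_def order_trans mult_right_mono mult_1_right)
qed

lemma kern_bound: "0 < x \<Longrightarrow> x < 1 \<Longrightarrow> 0 < y \<Longrightarrow> y < 1 \<Longrightarrow> \<bar>1 / (x + y) * gg s t j y\<bar> \<le> 1"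
proof -
  assume xy: "0 < x" "x < 1" "0 < y" "y < 1"
  have "\<bar>1 / (x + y) * gg s t j y\<bar> = \<bar>gg s t j y\<bar> / (x + y)" using xy by (simp add: abs_mult)
  also have "\<dots> \<le> y / (x + y)" using gg_bound[OF xy(3,4)] xy by (intro divide_right_mono) auto
  also have "\<dots> \<le> 1" using xy by simp
  finally show ?thesis .
qed


lemma ff_meas[measurable]: "ff s t a i \<in> borel_measurable borel"
  unfolding ff_def by measurable
lemma gg_meas[measurable]: "gg s t j \<in> borel_measurable borel"
  unfolding gg_def by measurable

lemma nu_meas: "f \<in> borel_measurable borel \<Longrightarrow> f \<in> borel_measurable nu"
  by (rule measurable_restrict_space1) simp

lemma nu_id: "(\<lambda>x. x) \<in> measurable nu borel"
  by (rule nu_meas) simp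

lemma nu_pair_meas:
  assumes H: "H \<in> borel_measurable (borel \<Otimes>\<^sub>M borel)"
  shows "H \<in> borel_measurable (nu \<Otimes>\<^sub>M nu)"
proof -
  have "(\<lambda>p. (fst p, snd p)) \<in> measurable (nu \<Otimes>\<^sub>M nu) (borel \<Otimes>\<^sub>M borel)"
  proof (rule measurable_Pair)
    show "fst \<in> measurable (nu \<Otimes>\<^sub>M nu) borel"
      using measurable_compose[OF measurable_fst[of nu nu] nu_id] by simp
    show "snd \<in> measurable (nu \<Otimes>\<^sub>M nu) borel"
      using measurable_compose[OF measurable_snd[of nu nu] nu_id] by simp
  qed
  from measurable_compose[OF this H] show ?thesis by simp
qed

lemma hh_meas: "hh s t j \<in> borel_measurable nu"
proof -
  interpret N: prob_space nu by (rule nu_prob)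
  have "(\<lambda>(x, y). 1 / (x + y) * gg s t j y) \<in> borel_measurable (nu \<Otimes>\<^sub>M nu)"
    by (rule nu_pair_meas) measurable
  then show ?thesis unfolding hh_def by (rule N.borel_measurable_lebesgue_integral)
qed

lemma kern_integrable: "0 < x \<Longrightarrow> x < 1 \<Longrightarrow> integrable nu (\<lambda>y. 1 / (x + y) * gg s t j y)"
proof -
  assume x: "0 < x" "x < 1"
  interpret N: prob_space nu by (rule nu_prob)
  show ?thesis
  proof (rule N.integrable_const_bound[where B = 1])
    show "AE y in nu. norm (1 / (x + y) * gg s t j y) \<le> 1"
      by (rule AE_I2) (use kern_bound[OF x] in auto)
    show "(\<lambda>y. 1 / (x + y) * gg s t j y) \<in> borel_measurable nu"
      by (rule nu_meas) measurable
  qed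
qed

lemma hh_bound: "0 < x \<Longrightarrow> x < 1 \<Longrightarrow> \<bar>hh s t j x\<bar> \<le> 1"
proof -
  assume x: "0 < x" "x < 1"
  interpret N: prob_space nu by (rule nu_prob)
  have "\<bar>hh s t j x\<bar> \<le> (\<integral>y. 1 \<partial>nu)"
    unfolding hh_def
    by (rule integral_abs_bound_integral) (use kern_integrable[OF x] kern_bound[OF x] in auto)
  also have "\<dots> = 1" using N.prob_space by simp
  finally show ?thesis .
qed

lemma mom_eq: "mom s t (i + a) (Suc j) = (\<integral>x. ff s t a i x * hh s t j x \<partial>nu)"
proof -
  define S where "S = {0<..<(1::real)}"
  define G where "G x y = ff s t a i x * (1 / (x + y) * gg s t j y)" for x y :: real
  have Gm: "(\<lambda>p. G (fst p) (snd p)) \<in> borel_measurable (borel \<Otimes>\<^sub>M borel)"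
    unfolding G_def by measurable
  have FG: "(fst p) ^ (s + (i + a)) * (snd p) ^ (s + Suc j) / (fst p + snd p)
      * ((1 - fst p) / (1 + fst p)) ^ t * ((1 - snd p) / (1 + snd p)) ^ t = G (fst p) (snd p)" for p :: "real \<times> real"
    unfolding G_def ff_def gg_def W_def by (simp add: field_simps)
  have "mom s t (i + a) (Suc j) = (\<integral>p. indicator (S \<times> S) p * G (fst p) (snd p) \<partial>(lborel :: (real \<times> real) measure))"
    unfolding mom_def set_lebesgue_integral_def S_def FG by simp
  also have "\<dots> = (\<integral>p. indicator (S \<times> S) p * G (fst p) (snd p) \<partial>(lborel \<Otimes>\<^sub>M lborel))"
    by (simp only: lborel_prod)
  also have "\<dots> = (\<integral>x. (\<integral>y. (\<lambda>p. indicator (S \<times> S) p * G (fst p) (snd p)) (x, y) \<partial>lborel) \<partial>lborel)"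
  proof (rule lborel_pair.integral_fst'[symmetric])
    show "integrable (lborel \<Otimes>\<^sub>M lborel) (\<lambda>p. indicator (S \<times> S) p * G (fst p) (snd p))"
    proof (rule Bochner_Integration.integrable_bound[where f = "indicator (S \<times> S) :: real \<times> real \<Rightarrow> real"])
      show "integrable (lborel \<Otimes>\<^sub>M lborel) (indicator (S \<times> S) :: real \<times> real \<Rightarrow> real)"
      proof (rule integrable_real_indicator)
        show "S \<times> S \<in> sets (lborel \<Otimes>\<^sub>M lborel)" unfolding S_def by simp
        have "emeasure (lborel \<Otimes>\<^sub>M lborel) (S \<times> S) = emeasure lborel S * emeasure lborel S"
          unfolding S_def by (rule lborel.emeasure_pair_measure_Times) auto
        then show "emeasure (lborel \<Otimes>\<^sub>M lborel) (S \<times> S) < \<infinity>" unfolding S_def by simp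
      qed
      show "(\<lambda>p. indicator (S \<times> S) p * G (fst p) (snd p)) \<in> borel_measurable (lborel \<Otimes>\<^sub>M lborel)"
        using Gm unfolding S_def by measurable
      show "AE p in lborel \<Otimes>\<^sub>M lborel. norm (indicator (S \<times> S) p * G (fst p) (snd p)) \<le> norm (indicator (S \<times> S) p :: real)"
      proof (rule AE_I2)
        fix p :: "real \<times> real"
        show "norm (indicator (S \<times> S) p * G (fst p) (snd p)) \<le> norm (indicator (S \<times> S) p :: real)"
        proof (cases "p \<in> S \<times> S")
          case True
          then have b: "0 < fst p" "fst p < 1" "0 < snd p" "snd p < 1" by (auto simp: S_def mem_Times_iff)
          have "\<bar>G (fst p) (snd p)\<bar> \<le> 1 * 1" unfolding G_def abs_mult[of "ff s t a i (fst p)"]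
            by (rule mult_mono) (use ff_bound[OF b(1,2)] kern_bound[OF b] in auto)
          then show ?thesis using True by simp
        qed simp
      qed
    qed
  qed
  also have "\<dots> = (\<integral>x. (\<integral>y. indicator (S \<times> S) (x, y) * G x y \<partial>lborel) \<partial>lborel)"
    by simp
  also have "\<dots> = (\<integral>x. indicator S x * (\<integral>y. G x y \<partial>nu) \<partial>lborel)"
  proof (rule Bochner_Integration.integral_cong[OF refl])
    fix x :: real
    have "(\<integral>y. indicator (S \<times> S) (x, y) * G x y \<partial>lborel) = (\<integral>y. indicator S x * (indicator S y * G x y) \<partial>lborel)"
      by (rule Bochner_Integration.integral_cong) (auto simp: indicator_def)
    also have "\<dots> = indicator S x * (\<integral>y. indicator S y * G x y \<partial>lborel)" by simp
    also have "(\<integral>y. indicator S y * G x y \<partial>lborel) = (\<integral>y. G x y \<partial>nu)"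
      unfolding S_def by (subst integral_restrict_space) auto
    finally show "(\<integral>y. indicator (S \<times> S) (x, y) * G x y \<partial>lborel) = indicator S x * (\<integral>y. G x y \<partial>nu)" .
  qed
  also have "\<dots> = (\<integral>x. (\<integral>y. G x y \<partial>nu) \<partial>nu)"
    unfolding S_def by (subst integral_restrict_space) auto
  also have "\<dots> = (\<integral>x. ff s t a i x * hh s t j x \<partial>nu)"
    unfolding G_def hh_def by (simp only: integral_mult_right_zero)
  finally show ?thesis .
qed


lemma dm_ff: "dm k (ff s t a) X = (\<Prod>l<k. X l ^ (s + a) * W t (X l)) * V k X"
proof -
  have "dm k (ff s t a) X = Determinant.det (Matrix.mat k k (\<lambda>(l, i). (X l ^ (s + a) * W t (X l)) * X l ^ i * 1))"
    unfolding dm_def ff_def by (intro arg_cong[where f = Determinant.det] eq_matI) (auto simp: power_add mult_ac)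
  also have "\<dots> = (\<Prod>l<k. X l ^ (s + a) * W t (X l)) * (\<Prod>j<k. 1) * Determinant.det (Matrix.mat k k (\<lambda>(l, i). X l ^ i))"
    by (rule det_scale_rc)
  finally show ?thesis by (simp add: vandermonde)
qed

lemma dm_gg: "dm k (gg s t) Y = (\<Prod>l<k. Y l ^ (s + 1) * W t (Y l)) * V k Y"
proof -
  have "dm k (gg s t) Y = Determinant.det (Matrix.mat k k (\<lambda>(l, i). (Y l ^ (s + 1) * W t (Y l)) * Y l ^ i * 1))"
    unfolding dm_def gg_def by (intro arg_cong[where f = Determinant.det] eq_matI) (auto simp: power_add mult_ac)
  also have "\<dots> = (\<Prod>l<k. Y l ^ (s + 1) * W t (Y l)) * (\<Prod>j<k. 1) * Determinant.det (Matrix.mat k k (\<lambda>(l, i). Y l ^ i))"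
    by (rule det_scale_rc)
  finally show ?thesis by (simp add: vandermonde)
qed

lemma dm_kern:
  assumes "\<And>l. l < k \<Longrightarrow> X l > 0" "\<And>m. m < k \<Longrightarrow> Y m > 0"
  shows "dm k (\<lambda>l y. 1 / (X l + y)) Y = V k Y * V k X * cp k Y X"
proof -
  have "dm k (\<lambda>l y. 1 / (X l + y)) Y = Determinant.det (Matrix.mat k k (\<lambda>(m, l). 1 / (Y m + X l)))"
    unfolding dm_def by (intro arg_cong[where f = Determinant.det] eq_matI) (auto simp: add.commute)
  also have "\<dots> = V k Y * V k X * cp k Y X"
    by (rule cauchy_det) (use assms in auto)
  finally show ?thesis .
qed

lemma spaceP: "X \<in> space (Pi\<^sub>M {..<k} (\<lambda>_. nu)) \<Longrightarrow> l < k \<Longrightarrow> 0 < X l \<and> X l < 1"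
  by (auto simp: space_PiM PiE_iff)

lemma inner:
  assumes X: "X \<in> space (Pi\<^sub>M {..<k} (\<lambda>_. nu))" and inj: "inj_on X {..<k}"
  shows "\<exists>J > 0. fact k * dm k (hh s t) X = V k X * J"
proof -
  let ?P = "Pi\<^sub>M {..<k} (\<lambda>_. nu)"
  interpret N: prob_space nu by (rule nu_prob)
  interpret P: prob_space ?P by (rule prob_space_PiM) (rule nu_prob)
  have Xb: "0 < X l" "X l < 1" if "l < k" for l using spaceP[OF X that] by auto
  define \<phi> where "\<phi> l y = 1 / (X l + y)" for l y
  define B where "B = 1 + (\<Sum>l<k. 1 / X l)"
  have "0 \<le> (\<Sum>l<k. 1 / X l)" by (intro sum_nonneg) (simp add: Xb(1) less_imp_le)
  then have B1: "1 \<le> B" unfolding B_def by simp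
  have \<phi>b: "\<bar>\<phi> l y\<bar> \<le> B" if "l < k" "y \<in> space nu" for l y
  proof -
    have y: "0 < y" using that by simp
    have "\<bar>\<phi> l y\<bar> = 1 / (X l + y)" unfolding \<phi>_def using Xb[OF that(1)] y by simp
    also have "\<dots> \<le> 1 / X l" using Xb[OF that(1)] y by (intro divide_left_mono) auto
    also have "\<dots> \<le> (\<Sum>l<k. 1 / X l)"
      by (rule member_le_sum[where f = "\<lambda>l. 1 / X l"]) (use that Xb in \<open>auto intro: less_imp_le\<close>)
    also have "\<dots> \<le> B" unfolding B_def by simp
    finally show ?thesis .
  qed
  have gb: "\<bar>gg s t j y\<bar> \<le> B" if "y \<in> space nu" for j y
    using gg_bound[of y s t j] that B1 by auto
  have \<phi>m: "\<phi> l \<in> borel_measurable nu" for l unfolding \<phi>_def by (rule nu_meas) measurable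
  have gm: "gg s t j \<in> borel_measurable nu" for j by (rule nu_meas) measurable
  have A: "fact k * Determinant.det (Matrix.mat k k (\<lambda>(i, j). \<integral>y. \<phi> i y * gg s t j y \<partial>nu))
      = (\<integral>Y. dm k \<phi> Y * dm k (gg s t) Y \<partial>?P)"
    by (rule andreief[OF nu_prob]) (use \<phi>m gm \<phi>b gb in auto)
  have dmh: "dm k (hh s t) X = Determinant.det (Matrix.mat k k (\<lambda>(i, j). \<integral>y. \<phi> i y * gg s t j y \<partial>nu))"
    unfolding dm_def hh_def \<phi>_def by simp
  have VX: "V k X \<noteq> 0" by (rule V_nonzero[OF inj])
  define F where "F Y = dm k \<phi> Y * dm k (gg s t) Y / V k X" for Y
  have Fval: "F Y = V k Y * V k Y * cp k Y X * (\<Prod>l<k. Y l ^ (s + 1) * W t (Y l))" if Y: "Y \<in> space ?P" for Y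
  proof -
    have Yb: "0 < Y l" "Y l < 1" if "l < k" for l using spaceP[OF Y that] by auto
    have "dm k \<phi> Y = V k Y * V k X * cp k Y X" unfolding \<phi>_def by (rule dm_kern) (use Xb Yb in auto)
    then show ?thesis unfolding F_def dm_gg using VX by (simp add: field_simps)
  qed
  have Fprod: "(\<Prod>l<k. Y l ^ (s + 1) * W t (Y l)) > 0" if Y: "Y \<in> space ?P" for Y
    using spaceP[OF Y] by (intro prod_pos) (auto intro!: mult_pos_pos W_pos)
  have Fcp: "cp k Y X > 0" if Y: "Y \<in> space ?P" for Y
    by (rule cp_pos) (use spaceP[OF Y] Xb in auto)
  have int1: "integrable ?P (\<lambda>Y. dm k \<phi> Y * dm k (gg s t) Y)"
  proof (rule P.integrable_const_bound[where B = "(fact k * B ^ k) * (fact k * B ^ k)"])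
    show "(\<lambda>Y. dm k \<phi> Y * dm k (gg s t) Y) \<in> borel_measurable ?P"
      by (intro borel_measurable_times dm_measurable \<phi>m gm)
    show "AE Y in ?P. norm (dm k \<phi> Y * dm k (gg s t) Y) \<le> (fact k * B ^ k) * (fact k * B ^ k)"
    proof (rule AE_I2)
      fix Y assume Y: "Y \<in> space ?P"
      have Ysp: "Y l \<in> space nu" if "l < k" for l using spaceP[OF Y that] by simp
      have "\<bar>dm k \<phi> Y\<bar> \<le> fact k * B ^ k" by (rule dm_bound) (use \<phi>b Ysp in auto)
      moreover have "\<bar>dm k (gg s t) Y\<bar> \<le> fact k * B ^ k" by (rule dm_bound) (use gb Ysp in auto)
      ultimately show "norm (dm k \<phi> Y * dm k (gg s t) Y) \<le> (fact k * B ^ k) * (fact k * B ^ k)"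
        by (simp add: abs_mult mult_mono)
    qed
  qed
  have intF: "integrable ?P F" unfolding F_def using int1 by (rule integrable_divide_zero)
  have Jpos: "0 < (\<integral>Y. F Y \<partial>?P)"
  proof (rule pos_PiM[OF intF])
    fix Y assume Y: "Y \<in> space ?P"
    show "0 \<le> F Y" unfolding Fval[OF Y]
      using Fprod[OF Y] Fcp[OF Y] by (intro mult_nonneg_nonneg[OF mult_nonneg_nonneg[OF zero_le_square]]) auto
    assume "inj_on Y {..<k}"
    then have "V k Y \<noteq> 0" by (rule V_nonzero)
    then have vv: "0 < V k Y * V k Y" by (metis not_real_square_gt_zero)
    show "0 < F Y" unfolding Fval[OF Y]
      by (rule mult_pos_pos[OF mult_pos_pos[OF vv Fcp[OF Y]] Fprod[OF Y]])
  qed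
  have "fact k * dm k (hh s t) X = (\<integral>Y. V k X * F Y \<partial>?P)"
    unfolding dmh A
  proof (rule Bochner_Integration.integral_cong[OF refl])
    fix Y show "dm k \<phi> Y * dm k (gg s t) Y = V k X * F Y" unfolding F_def using VX by simp
  qed
  also have "\<dots> = V k X * (\<integral>Y. F Y \<partial>?P)" by simp
  finally show ?thesis using Jpos by blast
qed

lemma pos_lemma: "Determinant.det (Matrix.mat k k (\<lambda>(i, j). mom s t (i + a) (Suc j))) > 0"
proof -
  let ?P = "Pi\<^sub>M {..<k} (\<lambda>_. nu)"
  interpret N: prob_space nu by (rule nu_prob)
  interpret P: prob_space ?P by (rule prob_space_PiM) (rule nu_prob)
  have e: "Matrix.mat k k (\<lambda>(i, j). mom s t (i + a) (Suc j)) = Matrix.mat k k (\<lambda>(i, j). \<integral>x. ff s t a i x * hh s t j x \<partial>nu)"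
    by (rule eq_matI) (auto simp: mom_eq)
  have A: "fact k * Determinant.det (Matrix.mat k k (\<lambda>(i, j). \<integral>x. ff s t a i x * hh s t j x \<partial>nu))
      = (\<integral>X. dm k (ff s t a) X * dm k (hh s t) X \<partial>?P)"
  proof (rule andreief[OF nu_prob])
    show "ff s t a i \<in> borel_measurable nu" for i by (rule nu_meas) measurable
    show "hh s t i \<in> borel_measurable nu" for i by (rule hh_meas)
    show "\<bar>ff s t a i x\<bar> \<le> 1" if "x \<in> space nu" for i x using that ff_bound by auto
    show "\<bar>hh s t i x\<bar> \<le> 1" if "x \<in> space nu" for i x using that hh_bound by auto
  qed
  have "0 < (\<integral>X. dm k (ff s t a) X * dm k (hh s t) X \<partial>?P)"
  proof (rule pos_PiM)
    show "integrable ?P (\<lambda>X. dm k (ff s t a) X * dm k (hh s t) X)"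
    proof (rule P.integrable_const_bound[where B = "(fact k * 1 ^ k) * (fact k * 1 ^ k)"])
      show "(\<lambda>X. dm k (ff s t a) X * dm k (hh s t) X) \<in> borel_measurable ?P"
        by (intro borel_measurable_times dm_measurable nu_meas ff_meas hh_meas)
      show "AE X in ?P. norm (dm k (ff s t a) X * dm k (hh s t) X) \<le> (fact k * 1 ^ k) * (fact k * 1 ^ k)"
      proof (rule AE_I2)
        fix X assume X: "X \<in> space ?P"
        have "\<bar>dm k (ff s t a) X\<bar> \<le> fact k * 1 ^ k" by (rule dm_bound) (use ff_bound spaceP[OF X] in auto)
        moreover have "\<bar>dm k (hh s t) X\<bar> \<le> fact k * 1 ^ k" by (rule dm_bound) (use hh_bound spaceP[OF X] in auto)
        ultimately show "norm (dm k (ff s t a) X * dm k (hh s t) X) \<le> (fact k * 1 ^ k) * (fact k * 1 ^ k)"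
          by (simp add: abs_mult mult_mono)
      qed
    qed
  next
    fix X assume X: "X \<in> space ?P"
    define C where "C = (\<Prod>l<k. X l ^ (s + a) * W t (X l))"
    have Cpos: "C > 0" unfolding C_def
      using spaceP[OF X] by (intro prod_pos) (auto intro!: mult_pos_pos W_pos)
    have df: "dm k (ff s t a) X = C * V k X" unfolding C_def by (rule dm_ff)
    show "0 \<le> dm k (ff s t a) X * dm k (hh s t) X"
    proof (cases "inj_on X {..<k}")
      case True
      obtain J where J: "J > 0" "fact k * dm k (hh s t) X = V k X * J" using inner[OF X True] by blast
      have "dm k (hh s t) X = V k X * J / fact k" using J(2) by (simp add: field_simps)
      then have "dm k (ff s t a) X * dm k (hh s t) X = C * (V k X * V k X) * J / fact k" unfolding df by simp
      then show ?thesis using Cpos J by simp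
    next
      case False
      then show ?thesis unfolding df using V_zero[OF False] by simp
    qed
    assume inj: "inj_on X {..<k}"
    obtain J where J: "J > 0" "fact k * dm k (hh s t) X = V k X * J" using inner[OF X inj] by blast
    have "dm k (hh s t) X = V k X * J / fact k" using J(2) by (simp add: field_simps)
    then have eq: "dm k (ff s t a) X * dm k (hh s t) X = C * (V k X * V k X) * J / fact k" unfolding df by simp
    have "V k X \<noteq> 0" by (rule V_nonzero[OF inj])
    then have "V k X * V k X > 0" by (metis not_real_square_gt_zero)
    then show "0 < dm k (ff s t a) X * dm k (hh s t) X" unfolding eq using Cpos J by simp
  qed
  then have "0 < fact k * Determinant.det (Matrix.mat k k (\<lambda>(i, j). mom s t (i + a) (Suc j)))"
    unfolding e A .
  then show ?thesis by (simp add: zero_less_mult_iff)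
qed


definition Dg :: "(nat \<Rightarrow> nat \<Rightarrow> real) \<Rightarrow> nat \<Rightarrow> (nat \<Rightarrow> real) \<Rightarrow> real" where
  "Dg c n v = Determinant.det (Matrix.mat (Suc n) (Suc n) (\<lambda>(i, j). if j < n then c i j else v i))"

definition cofl :: "(nat \<Rightarrow> nat \<Rightarrow> real) \<Rightarrow> nat \<Rightarrow> nat \<Rightarrow> real" where
  "cofl c n i = cofactor (Matrix.mat (Suc n) (Suc n) (\<lambda>(i, j). if j < n then c i j else 0)) i n"

lemma Dg_expand: "Dg c n v = (\<Sum>i<Suc n. v i * cofl c n i)"
proof -
  let ?A = "Matrix.mat (Suc n) (Suc n) (\<lambda>(i, j). if j < n then c i j else v i)"
  let ?B = "Matrix.mat (Suc n) (Suc n) (\<lambda>(i, j). if j < n then c i j else (0::real))"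
  have "Dg c n v = (\<Sum>i<Suc n. ?A $$ (i, n) * cofactor ?A i n)"
    unfolding Dg_def by (rule laplace_expansion_column) auto
  also have "\<dots> = (\<Sum>i<Suc n. v i * cofl c n i)"
  proof (rule sum.cong[OF refl])
    fix i assume i: "i \<in> {..<Suc n}"
    have "mat_delete ?A i n = mat_delete ?B i n"
      unfolding mat_delete_def by (rule eq_matI) auto
    then show "?A $$ (i, n) * cofactor ?A i n = v i * cofl c n i"
      using i unfolding cofl_def cofactor_def by simp
  qed
  finally show ?thesis .
qed

lemma Dg_dup: assumes "j < n" shows "(\<Sum>i<Suc n. c i j * cofl c n i) = 0"
proof -
  have "(\<Sum>i<Suc n. c i j * cofl c n i) = Dg c n (\<lambda>i. c i j)"
    by (simp add: Dg_expand)
  also have "\<dots> = 0" unfolding Dg_def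
    by (rule det_identical_columns[of _ "Suc n" j n]) (use assms in \<open>auto intro!: eq_vecI\<close>)
  finally show ?thesis .
qed

lemma Dg_last: "(\<Sum>i<Suc n. c i n * cofl c n i) = Determinant.det (Matrix.mat (Suc n) (Suc n) (\<lambda>(i, j). c i j))"
proof -
  have "(\<Sum>i<Suc n. c i n * cofl c n i) = Dg c n (\<lambda>i. c i n)"
    by (simp add: Dg_expand)
  also have "\<dots> = Determinant.det (Matrix.mat (Suc n) (Suc n) (\<lambda>(i, j). c i j))"
    unfolding Dg_def by (rule arg_cong[where f = Determinant.det], rule eq_matI) (auto simp: less_Suc_eq)
  finally show ?thesis .
qed

lemma cofl_top: "cofl c n n = Determinant.det (Matrix.mat n n (\<lambda>(i, j). c i j))"
proof -
  have "mat_delete (Matrix.mat (Suc n) (Suc n) (\<lambda>(i, j). if j < n then c i j else 0)) n n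
     = Matrix.mat n n (\<lambda>(i, j). c i j)"
    unfolding mat_delete_def by (rule eq_matI) auto
  then show ?thesis unfolding cofl_def cofactor_def by simp
qed

lemma nonsing_zero:
  fixes M :: "nat \<Rightarrow> nat \<Rightarrow> real"
  assumes "Determinant.det (Matrix.mat n n (\<lambda>(i, j). M i j)) \<noteq> 0"
    and "\<And>j. j < n \<Longrightarrow> (\<Sum>i<n. M i j * r i) = 0"
    and "i < n"
  shows "r i = 0"
proof -
  let ?A = "Matrix.mat n n (\<lambda>(j, i). M i j)"
  have At: "?A = transpose_mat (Matrix.mat n n (\<lambda>(i, j). M i j))"
    by (rule eq_matI) auto
  have "Determinant.det ?A \<noteq> 0"
    unfolding At by (subst det_transpose[of _ n]) (use assms(1) in auto)
  then have nz: "\<not> (\<exists>v. v \<in> carrier_vec n \<and> v \<noteq> 0\<^sub>v n \<and> ?A *\<^sub>v v = 0\<^sub>v n)"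
    using det_0_iff_vec_prod_zero_field[of ?A n] by auto
  have "?A *\<^sub>v vec n r = 0\<^sub>v n"
  proof (rule eq_vecI)
    fix j assume j: "j < dim_vec (0\<^sub>v n :: real vec)"
    then have "(?A *\<^sub>v vec n r) $ j = (\<Sum>i\<in>{0..<n}. M i j * r i)"
      by (simp add: scalar_prod_def)
    also have "\<dots> = 0" using assms(2)[of j] j by (simp add: atLeast0LessThan)
    finally show "(?A *\<^sub>v vec n r) $ j = 0\<^sub>v n $ j" using j by simp
  qed simp
  then have "vec n r = 0\<^sub>v n" using nz vec_carrier[of n r] by blast
  then have "vec n r $ i = 0\<^sub>v n $ i" by simp
  then show ?thesis using assms(3) by simp
qed

lemma key_identity:
  fixes m :: "nat \<Rightarrow> nat \<Rightarrow> real" and N :: nat and x :: real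
  defines "c1 \<equiv> \<lambda>i j. m i (Suc j)" and "c2 \<equiv> \<lambda>i j. m (Suc i) (Suc j)"
  assumes nz: "Determinant.det (Matrix.mat (Suc N) (Suc N) (\<lambda>(i, j). c1 i j)) \<noteq> 0"
  shows "Determinant.det (Matrix.mat N N (\<lambda>(i, j). c2 i j)) * Dg c1 (Suc N) (\<lambda>i. x ^ i)
    = Determinant.det (Matrix.mat (Suc N) (Suc N) (\<lambda>(i, j). c1 i j)) * x * Dg c2 N (\<lambda>i. x ^ i)
      - Determinant.det (Matrix.mat (Suc N) (Suc N) (\<lambda>(i, j). c2 i j)) * Dg c1 N (\<lambda>i. x ^ i)"
proof -
  define TA where "TA k = Determinant.det (Matrix.mat k k (\<lambda>(i, j). c2 i j))" for k
  define XI where "XI k = Determinant.det (Matrix.mat k k (\<lambda>(i, j). c1 i j))" for k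
  define r where "r i = TA N * cofl c1 (Suc N) i - XI (Suc N) * (if i = 0 then 0 else cofl c2 N (i - 1))
     + TA (Suc N) * (if i < Suc N then cofl c1 N i else 0)" for i
  have e1: "Dg c1 (Suc N) (\<lambda>i. x ^ i) = (\<Sum>i<Suc (Suc N). x ^ i * cofl c1 (Suc N) i)"
    by (rule Dg_expand)
  have e2: "x * Dg c2 N (\<lambda>i. x ^ i) = (\<Sum>i<Suc (Suc N). x ^ i * (if i = 0 then 0 else cofl c2 N (i - 1)))"
    unfolding Dg_expand sum.lessThan_Suc_shift[of _ "Suc N"] by (simp add: sum_distrib_left mult_ac distrib_left)
  have e3: "Dg c1 N (\<lambda>i. x ^ i) = (\<Sum>i<Suc (Suc N). x ^ i * (if i < Suc N then cofl c1 N i else 0))"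
    unfolding Dg_expand by (simp add: sum.lessThan_Suc[of _ "Suc N"])
  have diff: "TA N * Dg c1 (Suc N) (\<lambda>i. x ^ i) - (XI (Suc N) * x * Dg c2 N (\<lambda>i. x ^ i)
      - TA (Suc N) * Dg c1 N (\<lambda>i. x ^ i)) = (\<Sum>i<Suc (Suc N). x ^ i * r i)"
    unfolding r_def e1 e3 mult.assoc[of "XI (Suc N)" x] e2
    by (simp add: sum_distrib_left sum_subtractf[symmetric] sum.distrib[symmetric] algebra_simps)
  have rtop: "r (Suc N) = 0"
    unfolding r_def using cofl_top[of c1 "Suc N"] cofl_top[of c2 N] by (simp add: TA_def XI_def)
  have orth: "(\<Sum>i<Suc N. c1 i j * r i) = 0" if j: "j < Suc N" for j
  proof -
    have s1: "(\<Sum>i<Suc (Suc N). c1 i j * cofl c1 (Suc N) i) = 0" by (rule Dg_dup) (use j in auto)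
    have s2: "(\<Sum>i<Suc (Suc N). c1 i j * (if i = 0 then 0 else cofl c2 N (i - 1)))
        = (\<Sum>i<Suc N. c2 i j * cofl c2 N i)"
      unfolding sum.lessThan_Suc_shift[of _ "Suc N"] by (simp add: c1_def c2_def)
    have s3: "(\<Sum>i<Suc (Suc N). c1 i j * (if i < Suc N then cofl c1 N i else 0))
        = (\<Sum>i<Suc N. c1 i j * cofl c1 N i)"
      by (simp add: sum.lessThan_Suc[of _ "Suc N"])
    have s23: "XI (Suc N) * (\<Sum>i<Suc N. c2 i j * cofl c2 N i) = TA (Suc N) * (\<Sum>i<Suc N. c1 i j * cofl c1 N i)"
    proof (cases "j < N")
      case True
      then show ?thesis using Dg_dup[of j N c2] Dg_dup[of j N c1] by simp
    next
      case False
      then have "j = N" using j by simp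
      then show ?thesis using Dg_last[of c2 N] Dg_last[of c1 N]
        by (simp add: TA_def XI_def c1_def c2_def)
    qed
    have "(\<Sum>i<Suc (Suc N). c1 i j * r i) = TA N * (\<Sum>i<Suc (Suc N). c1 i j * cofl c1 (Suc N) i)
       - XI (Suc N) * (\<Sum>i<Suc (Suc N). c1 i j * (if i = 0 then 0 else cofl c2 N (i - 1)))
       + TA (Suc N) * (\<Sum>i<Suc (Suc N). c1 i j * (if i < Suc N then cofl c1 N i else 0))"
      unfolding r_def by (simp add: sum_distrib_left sum_subtractf[symmetric] sum.distrib[symmetric] algebra_simps)
    also have "\<dots> = 0" unfolding s1 s2 s3 s23 by simp
    finally have "(\<Sum>i<Suc (Suc N). c1 i j * r i) = 0" .
    then show ?thesis using rtop by simp
  qed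
  have rz: "r i = 0" if "i < Suc N" for i
    by (rule nonsing_zero[of "Suc N" c1 r i]) (use nz orth that in auto)
  have "(\<Sum>i<Suc (Suc N). x ^ i * r i) = 0"
    using rz rtop by (intro sum.neutral) (auto simp: less_Suc_eq)
  with diff show ?thesis unfolding TA_def XI_def by simp
qed

theorem proposition2p6:
  fixes n s t :: nat and x :: real
  assumes "n \<ge> 1"
  shows "Qpoly n s t x = x * Ppoly (n - 1) (s + 1) t x
           - (xi (n - 1) s t * tau n (s + 1) t) / (xi n s t * tau (n - 1) (s + 1) t)
             * Qpoly (n - 1) s t x"
proof -
  obtain N where n: "n = Suc N" using assms by (cases n) auto
  define c1 where "c1 = (\<lambda>i j. mom s t i (Suc j))"
  define c2 where "c2 = (\<lambda>i j. mom s t (Suc i) (Suc j))"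
  have mshift: "mom (s + 1) t i j = c2 i j" for i j
    unfolding c2_def mom_def by (simp add: algebra_simps)
  have xi_eq: "xi k s t = Determinant.det (Matrix.mat k k (\<lambda>(i, j). c1 i j))" for k
    unfolding xi_def c1_def by simp
  have tau_eq: "tau k (s + 1) t = Determinant.det (Matrix.mat k k (\<lambda>(i, j). c2 i j))" for k
    unfolding tau_def mshift by simp
  have Q_eq: "Qpoly k s t x = Dg c1 k (\<lambda>i. x ^ i) / xi k s t" for k
    unfolding Qpoly_def Dg_def c1_def by (simp only: Suc_eq_plus1)
  have P_eq: "Ppoly k (s + 1) t x = Dg c2 k (\<lambda>i. x ^ i) / tau k (s + 1) t" for k
    unfolding Ppoly_def Dg_def mshift by simp
  have xpos: "xi k s t > 0" for k
    using pos_lemma[of k s t 0] unfolding xi_def by simp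
  have tpos: "tau k (s + 1) t > 0" for k
    using pos_lemma[of k s t 1] unfolding tau_eq c2_def by simp
  have key: "tau N (s + 1) t * Dg c1 (Suc N) (\<lambda>i. x ^ i)
    = xi (Suc N) s t * x * Dg c2 N (\<lambda>i. x ^ i) - tau (Suc N) (s + 1) t * Dg c1 N (\<lambda>i. x ^ i)"
    using key_identity[where m="mom s t" and N=N and x=x] xpos[of "Suc N"]
    unfolding xi_eq tau_eq c1_def c2_def by simp
  have a: "xi (Suc N) s t \<noteq> 0" "xi N s t \<noteq> 0" "tau N (s + 1) t \<noteq> 0"
    using xpos tpos by (auto simp: less_le)
  define A where "A = xi (Suc N) s t"
  define B where "B = xi N s t"
  define C where "C = tau N (s + 1) t"
  define E where "E = tau (Suc N) (s + 1) t"
  define D1 where "D1 = Dg c1 (Suc N) (\<lambda>i. x ^ i)"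
  define D2 where "D2 = Dg c2 N (\<lambda>i. x ^ i)"
  define D0 where "D0 = Dg c1 N (\<lambda>i. x ^ i)"
  have k: "C * D1 = A * x * D2 - E * D0" and nz: "A \<noteq> 0" "B \<noteq> 0" "C \<noteq> 0"
    using key a unfolding A_def B_def C_def D0_def D1_def D2_def E_def by auto
  have "D1 / A = x * (D2 / C) - B * E / (A * C) * (D0 / B)"
  proof -
    have "D1 = (A * x * D2 - E * D0) / C" using k nz by (simp add: eq_divide_eq mult.commute)
    then show ?thesis using nz by (simp add: field_simps)
  qed
  then show ?thesis unfolding n Q_eq P_eq A_def B_def C_def D0_def D1_def D2_def E_def by simp
qed

end
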